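(* Let $\mathcal{B}$ be a real uniform Banach space, $x_1,\dots,x_m\in\mathcal{B}$, and $Z=\{g\in\mathcal{B}: [g,x_i]=0\ \forall i=1,\dots,m\}$. Then for every $f_0\in\mathcal{B}$ there exists $g\in Z$ such that $(f_0+g)^*\in\operatorname{span}\{x_1^*,\dots,x_m^*\}$ and $\|f_0+g\|\le\|f_0\|$. (Note that $f_0+g$ satisfies $[f_0+g,x_i]=[f_0,x_i]$ for all $i$.)
   Context: A real Banach space $\mathcal{B}$ is called uniform if it is uniformly convex and uniformly smooth (equivalently, its norm is uniformly Fréchet differentiable). On such a space there is a unique semi-inner product inducing the norm, i.e. a unique map $[\cdot,\cdot]:\mathcal{B}\times\mathcal{B}\to\mathbb{R}$ that is linear in the first argument, satisfies $[x,x]=\|x\|^2$, $|[x,y]|^2\le[x,x][y,y]$ and $[x,\lambda y]=\lambda[x,y]$ for $\lambda\in\mathbb{R}$; it is given by $[y,x]=\|x\|\lim_{t\to0}\frac{\|x+ty\|-\|x\|}{t}$ for $x\neq0$ (and $[y,0]=0$). The duality map $x\mapsto x^*\in\mathcal{B}^*$ is defined by $x^*(y)=[y,x]$; it is an isometric bijection $\mathcal{B}\to\mathcal{B}^*$. *)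

theory Defs
  imports "HOL-Analysis.Analysis"
begin

definition uniformly_convex :: "'a::real_normed_vector itself \<Rightarrow> bool" where
  "uniformly_convex _ \<longleftrightarrow>
     (\<forall>\<epsilon>>0. \<exists>\<delta>>0. \<forall>x y::'a. norm x \<le> 1 \<and> norm y \<le> 1 \<and> norm (x - y) \<ge> \<epsilon>
        \<longrightarrow> norm ((x + y) /\<^sub>R 2) \<le> 1 - \<delta>)"

text \<open>Uniform smoothness: the modulus of smoothness rho(t) satisfies rho(t)/t -> 0 as t -> 0+.\<close>
definition uniformly_smooth :: "'a::real_normed_vector itself \<Rightarrow> bool" where
  "uniformly_smooth _ \<longleftrightarrow>
     (\<forall>\<epsilon>>0. \<exists>\<delta>>0. \<forall>x y::'a. \<forall>t::real. norm x = 1 \<and> norm y = 1 \<and> 0 < t \<and> t < \<delta>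
        \<longrightarrow> norm (x + t *\<^sub>R y) + norm (x - t *\<^sub>R y) - 2 \<le> \<epsilon> * t)"

definition uniform_banach :: "'a::banach itself \<Rightarrow> bool" where
  "uniform_banach T \<longleftrightarrow> uniformly_convex T \<and> uniformly_smooth T"

definition sip :: "'a::real_normed_vector \<Rightarrow> 'a \<Rightarrow> real" where
  "sip y x = (if x = 0 then 0
              else norm x * Lim (at (0::real)) (\<lambda>t. (norm (x + t *\<^sub>R y) - norm x) / t))"

definition dual_map :: "'a::real_normed_vector \<Rightarrow> 'a \<Rightarrow> real" where
  "dual_map x = (\<lambda>y. sip y x)"

end

theory Submission
  imports Defs
begin


definition qq :: "'a::real_normed_vector \<Rightarrow> 'a \<Rightarrow> real \<Rightarrow> real" where
  "qq x y t = (norm (x + t *\<^sub>R y) - norm x) / t"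

lemma slope_mono:
  fixes x y :: "'a::real_normed_vector"
  assumes "a < 0" "0 < b"
  shows "qq x y a \<le> qq x y b"
proof -
  have e: "(b - a) *\<^sub>R x = b *\<^sub>R (x + a *\<^sub>R y) + (-a) *\<^sub>R (x + b *\<^sub>R y)"
    by (simp add: algebra_simps)
  have "(b - a) * norm x = norm ((b - a) *\<^sub>R x)" using assms by simp
  also have "\<dots> \<le> b * norm (x + a *\<^sub>R y) + (-a) * norm (x + b *\<^sub>R y)"
    unfolding e using assms by (metis abs_of_nonneg abs_of_pos less_eq_real_def neg_0_less_iff_less norm_scaleR norm_triangle_ineq)
  finally have k: "(b - a) * norm x \<le> b * norm (x + a *\<^sub>R y) + (-a) * norm (x + b *\<^sub>R y)" .
  show ?thesis unfolding qq_def using assms k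
    by (simp add: divide_simps) (smt (verit) mult.commute right_diff_distrib)
qed

lemma smooth_scaled:
  fixes x y :: "'a::real_normed_vector"
  assumes sm: "uniformly_smooth TYPE('a)" and x: "x \<noteq> 0" and e: "e > 0"
  shows "\<exists>d>0. \<forall>t. 0 < t \<and> t < d \<longrightarrow> norm (x + t *\<^sub>R y) + norm (x - t *\<^sub>R y) - 2 * norm x \<le> e * t"
proof (cases "y = 0")
  case True
  show ?thesis
  proof (intro exI[of _ 1] conjI allI impI)
    fix t :: real assume "0 < t \<and> t < 1"
    thus "norm (x + t *\<^sub>R y) + norm (x - t *\<^sub>R y) - 2 * norm x \<le> e * t"
    proof -
      have z: "norm (x + t *\<^sub>R y) + norm (x - t *\<^sub>R y) - 2 * norm x = 0" using True by simp
      have "0 \<le> e * t" using e \<open>0 < t \<and> t < 1\<close> by (meson less_eq_real_def mult_pos_pos)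
      thus ?thesis unfolding z .
    qed
  qed simp
next
  case False
  define n where "n = norm x"
  define k where "k = norm y"
  have n: "n > 0" and k: "k > 0" using x False by (auto simp: n_def k_def)
  have ek: "e / k > 0" using e k by simp
  from sm[unfolded uniformly_smooth_def, rule_format, OF ek]
  obtain d where d: "d > 0" and D: "\<forall>(u::'a) v (s::real). norm u = 1 \<and> norm v = 1 \<and> 0 < s \<and> s < d
        \<longrightarrow> norm (u + s *\<^sub>R v) + norm (u - s *\<^sub>R v) - 2 \<le> (e / k) * s"
    by blast
  show ?thesis
  proof (intro exI[of _ "d * n / k"] conjI allI impI)
    show "d * n / k > 0" using d n k by simp
    fix t assume t: "0 < t \<and> t < d * n / k"
    define u where "u = x /\<^sub>R n"
    define v where "v = y /\<^sub>R k"
    define s where "s = t * k / n"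
    have s: "0 < s" "s < d" using t n k by (auto simp: s_def field_simps)
    have nu: "norm u = 1" "norm v = 1" using n k by (auto simp: u_def v_def n_def k_def)
    have 1: "x + t *\<^sub>R y = n *\<^sub>R (u + s *\<^sub>R v)" "x - t *\<^sub>R y = n *\<^sub>R (u - s *\<^sub>R v)"
      using n k by (auto simp: u_def v_def s_def algebra_simps)
    have "norm (u + s *\<^sub>R v) + norm (u - s *\<^sub>R v) - 2 \<le> (e / k) * s" using D nu s by simp
    hence "n * (norm (u + s *\<^sub>R v) + norm (u - s *\<^sub>R v) - 2) \<le> n * ((e / k) * s)"
      by (rule mult_left_mono) (use n in auto)
    also have "n * ((e / k) * s) = e * t" using n k by (simp add: s_def field_simps)
    finally show "norm (x + t *\<^sub>R y) + norm (x - t *\<^sub>R y) - 2 * norm x \<le> e * t"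
      unfolding 1 norm_scaleR using n by (simp add: n_def[symmetric] algebra_simps)
  qed
qed

lemma deriv_exists:
  fixes x y :: "'a::real_normed_vector"
  assumes sm: "uniformly_smooth TYPE('a)" and x: "x \<noteq> 0"
  shows "\<exists>L. (qq x y \<longlongrightarrow> L) (at 0)"
proof -
  define L where "L = Inf (qq x y ` {0<..})"
  have bdd: "bdd_below (qq x y ` {0<..})"
    by (rule bdd_belowI[of _ "qq x y (-1)"]) (auto intro: slope_mono)
  have lo: "L \<le> qq x y t" if "t > 0" for t
    unfolding L_def using bdd that by (auto intro: cInf_lower)
  have hi: "qq x y (-t) \<le> L" if "t > 0" for t
    unfolding L_def using that by (intro cInf_greatest) (auto intro: slope_mono)
  have diff: "qq x y t - qq x y (-t) = (norm (x + t *\<^sub>R y) + norm (x - t *\<^sub>R y) - 2 * norm x) / t"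
    if "t > 0" for t using that by (simp add: qq_def field_simps)
  have "(qq x y \<longlongrightarrow> L) (at 0)"
    unfolding LIM_eq
  proof (intro allI impI)
    fix r :: real assume r: "r > 0"
    obtain d where d: "d > 0" and D: "\<And>t. 0 < t \<and> t < d \<Longrightarrow>
       norm (x + t *\<^sub>R y) + norm (x - t *\<^sub>R y) - 2 * norm x \<le> (r/2) * t"
      using smooth_scaled[OF sm x, of "r/2" y] r by auto
    have key: "qq x y t - qq x y (-t) < r" if "0 < t" "t < d" for t
    proof -
      have "qq x y t - qq x y (-t) \<le> (r/2) * t / t"
        unfolding diff[OF that(1)] by (rule divide_right_mono[OF D[OF conjI[OF that]]]) (use that in simp)
      also have "\<dots> < r" using that r by simp
      finally show ?thesis .
    qed
    show "\<exists>s>0. \<forall>t. t \<noteq> 0 \<and> norm (t - 0) < s \<longrightarrow> norm (qq x y t - L) < r"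
    proof (intro exI[of _ d] conjI allI impI)
      fix t :: real assume t: "t \<noteq> 0 \<and> norm (t - 0) < d"
      show "norm (qq x y t - L) < r"
      proof (cases "t > 0")
        case True
        then show ?thesis using lo[of t] hi[of t] key[of t] t by auto
      next
        case False
        hence "-t > 0" using t by auto
        then show ?thesis using lo[of "-t"] hi[of "-t"] key[of "-t"] t by auto
      qed
    qed (fact d)
  qed
  thus ?thesis by blast
qed

definition dd :: "'a::real_normed_vector \<Rightarrow> 'a \<Rightarrow> real" where
  "dd x y = Lim (at (0::real)) (qq x y)"

lemma dd_tendsto:
  fixes x y :: "'a::real_normed_vector"
  assumes sm: "uniformly_smooth TYPE('a)" and x: "x \<noteq> 0"
  shows "(qq x y \<longlongrightarrow> dd x y) (at 0)"
  using deriv_exists[OF sm x, of y] unfolding dd_def by (metis tendsto_Lim trivial_limit_at)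

lemma sip_dd: "x \<noteq> 0 \<Longrightarrow> sip y x = norm x * dd x y"
  unfolding sip_def dd_def qq_def by simp

lemma compose_scale:
  fixes f :: "real \<Rightarrow> real"
  assumes "(f \<longlongrightarrow> L) (at 0)" "c \<noteq> 0"
  shows "((\<lambda>t. f (c * t)) \<longlongrightarrow> L) (at 0)"
proof -
  have "filterlim (\<lambda>t. c * t) (at 0) (at (0::real))"
  proof (rule filterlim_atI)
    show "((*) c \<longlongrightarrow> 0) (at 0)" by (auto intro!: tendsto_eq_intros)
    show "\<forall>\<^sub>F t in at 0. c * t \<noteq> 0" using assms(2) by (auto simp: eventually_at_filter)
  qed
  thus ?thesis using assms(1) by (rule filterlim_compose[rotated])
qed

lemma dd_scale:
  fixes x y :: "'a::real_normed_vector"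
  assumes sm: "uniformly_smooth TYPE('a)" and x: "x \<noteq> 0"
  shows "dd x (c *\<^sub>R y) = c * dd x y"
proof (cases "c = 0")
  case True
  have "qq x 0 = (\<lambda>t. 0)" by (auto simp: qq_def)
  hence "(qq x 0 \<longlongrightarrow> 0) (at 0)" by simp
  with dd_tendsto[OF sm x, of 0] True show ?thesis
    using tendsto_unique[OF trivial_limit_at] by (metis mult_zero_left scale_zero_left)
next
  case False
  have "((\<lambda>t. c * qq x y (c * t)) \<longlongrightarrow> c * dd x y) (at 0)"
    by (intro tendsto_mult tendsto_const compose_scale dd_tendsto sm x False)
  moreover have "c * qq x y (c * t) = qq x (c *\<^sub>R y) t" if "t \<noteq> 0" for t
    using that False by (simp add: qq_def field_simps)
  ultimately have "(qq x (c *\<^sub>R y) \<longlongrightarrow> c * dd x y) (at 0)"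
    using LIM_equal by (smt (verit, ccfv_threshold))
  with dd_tendsto[OF sm x, of "c *\<^sub>R y"] show ?thesis
    using tendsto_unique[OF trivial_limit_at] by blast
qed

lemma dd_subadd:
  fixes x y z :: "'a::real_normed_vector"
  assumes sm: "uniformly_smooth TYPE('a)" and x: "x \<noteq> 0"
  shows "dd x (y + z) \<le> dd x y + dd x z"
proof -
  have a: "((\<lambda>t. qq x y (2 * t) + qq x z (2 * t)) \<longlongrightarrow> dd x y + dd x z) (at 0)"
    by (intro tendsto_add compose_scale dd_tendsto sm x) auto
  have b: "(qq x (y + z) \<longlongrightarrow> dd x (y + z)) (at 0)" by (rule dd_tendsto[OF sm x])
  have le: "qq x (y + z) t \<le> qq x y (2 * t) + qq x z (2 * t)" if "t > 0" for t
  proof -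
    have e: "x + t *\<^sub>R (y + z) = (1/2) *\<^sub>R (x + (2 * t) *\<^sub>R y) + (1/2) *\<^sub>R (x + (2 * t) *\<^sub>R z)"
      apply (simp add: algebra_simps)
      by (metis field_sum_of_halves scaleR_left_distrib scaleR_one)
    have "norm (x + t *\<^sub>R (y + z)) \<le> (1/2) * norm (x + (2 * t) *\<^sub>R y) + (1/2) * norm (x + (2 * t) *\<^sub>R z)"
      unfolding e by (rule order.trans[OF norm_triangle_ineq]) simp
    hence "(norm (x + t *\<^sub>R (y + z)) - norm x) / t \<le> ((1/2) * norm (x + (2 * t) *\<^sub>R y) + (1/2) * norm (x + (2 * t) *\<^sub>R z) - norm x) / t"
      using that by (intro divide_right_mono) auto
    also have "\<dots> = qq x y (2 * t) + qq x z (2 * t)" using that unfolding qq_def by (simp add: field_simps)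
    finally show ?thesis unfolding qq_def .
  qed
  show ?thesis
  proof (rule tendsto_le[OF _ a[THEN tendsto_within_subset] b[THEN tendsto_within_subset]])
    show "at_right (0::real) \<noteq> bot" by simp
    show "\<forall>\<^sub>F t in at_right 0. qq x (y + z) t \<le> qq x y (2 * t) + qq x z (2 * t)"
      using le by (auto simp: eventually_at_filter)
  qed auto
qed

lemma dd_bound:
  fixes x y :: "'a::real_normed_vector"
  assumes sm: "uniformly_smooth TYPE('a)" and x: "x \<noteq> 0"
  shows "\<bar>dd x y\<bar> \<le> norm y"
proof -
  have "\<bar>qq x y t\<bar> \<le> norm y" if "t \<noteq> 0" for t
  proof -
    have "\<bar>norm (x + t *\<^sub>R y) - norm x\<bar> \<le> norm (t *\<^sub>R y)"
      by (metis add_diff_cancel_left' norm_triangle_ineq3)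
    thus ?thesis using that unfolding qq_def by (simp add: abs_divide divide_le_eq mult.commute)
  qed
  hence "\<forall>\<^sub>F t in at 0. norm (qq x y t) \<le> norm y" by (auto simp: eventually_at_filter)
  from tendsto_upperbound[OF tendsto_norm[OF dd_tendsto[OF sm x]] this] show ?thesis by simp
qed

lemma sip_bounded_linear:
  fixes x :: "'a::real_normed_vector"
  assumes sm: "uniformly_smooth TYPE('a)"
  shows "bounded_linear (\<lambda>y. sip y x)"
proof (cases "x = 0")
  case True thus ?thesis by (simp add: sip_def)
next
  case False
  have add: "dd x (y + z) = dd x y + dd x z" for y z
  proof -
    have "- dd x (y + z) = dd x ((-1) *\<^sub>R (y + z))" using dd_scale[OF sm False, of "-1" "y+z"] by simp
    also have "\<dots> = dd x ((-1) *\<^sub>R y + (-1) *\<^sub>R z)" by (simp only: scaleR_right_distrib)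
    also have "\<dots> \<le> dd x ((-1) *\<^sub>R y) + dd x ((-1) *\<^sub>R z)" by (rule dd_subadd[OF sm False])
    also have "\<dots> = - dd x y - dd x z" by (simp only: dd_scale[OF sm False])
    finally show ?thesis using dd_subadd[OF sm False, of y z] by linarith
  qed
  show ?thesis
  proof (rule bounded_linear_intro[of _ "norm x"])
    show "sip (y + z) x = sip y x + sip z x" for y z
      using False by (simp add: sip_dd add algebra_simps)
    show "sip (r *\<^sub>R y) x = r *\<^sub>R sip y x" for r y
      using False by (simp add: sip_dd dd_scale[OF sm False])
    show "norm (sip y x) \<le> norm y * norm x" for y
      using False dd_bound[OF sm False, of y] by (simp add: sip_dd abs_mult mult.commute mult_left_mono)
  qed
qed



definition lin :: "('a::real_vector \<Rightarrow> real) \<Rightarrow> bool" where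
  "lin f \<longleftrightarrow> (\<forall>y z a. f (y - a *\<^sub>R z) = f y - a * f z)"

lemma bounded_linear_lin: "bounded_linear f \<Longrightarrow> lin f"
proof -
  assume "bounded_linear f"
  then interpret bounded_linear f .
  show "lin f" unfolding lin_def by (simp add: diff scaleR)
qed

lemma span_lemma:
  fixes \<phi> :: "'a::real_vector \<Rightarrow> real" and \<psi> :: "nat \<Rightarrow> 'a \<Rightarrow> real"
  assumes "lin \<phi>" "\<forall>i. lin (\<psi> i)"
    and "\<forall>y. (\<forall>i<m. \<psi> i y = 0) \<longrightarrow> \<phi> y = 0"
  shows "\<exists>c. \<phi> = (\<lambda>y. \<Sum>i<m. c i * \<psi> i y)"
  using assms
proof (induction m arbitrary: \<phi>)
  case 0
  thus ?case by auto
next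
  case (Suc m)
  note lp = Suc.prems(1)[unfolded lin_def, rule_format]
  have lq: "\<And>i y z a. \<psi> i (y - a *\<^sub>R z) = \<psi> i y - a * \<psi> i z"
    using Suc.prems(2) unfolding lin_def by blast
  show ?case
  proof (cases "\<exists>y0. (\<forall>i<m. \<psi> i y0 = 0) \<and> \<psi> m y0 \<noteq> 0")
    case True
    then obtain y0 where y0: "\<forall>i<m. \<psi> i y0 = 0" "\<psi> m y0 \<noteq> 0" by blast
    define y1 where "y1 = (1 / \<psi> m y0) *\<^sub>R y0"
    have lq0: "\<psi> i (a *\<^sub>R z) = a * \<psi> i z" for i a z
      using lq[of i 0 "-a" z] lq[of i 0 1 0] by simp
    have lp0: "\<phi> (a *\<^sub>R z) = a * \<phi> z" for a z
      using lp[of 0 "-a" z] lp[of 0 1 0] by simp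
    have y1: "\<forall>i<m. \<psi> i y1 = 0" "\<psi> m y1 = 1"
      using y0 by (auto simp: y1_def lq0)
    define \<phi>' where "\<phi>' = (\<lambda>y. \<phi> y - \<phi> y1 * \<psi> m y)"
    have "lin \<phi>'" unfolding lin_def \<phi>'_def by (simp add: lp lq algebra_simps)
    moreover have "\<forall>y. (\<forall>i<m. \<psi> i y = 0) \<longrightarrow> \<phi>' y = 0"
    proof (intro allI impI)
      fix y assume h: "\<forall>i<m. \<psi> i y = 0"
      have "\<forall>i<Suc m. \<psi> i (y - \<psi> m y *\<^sub>R y1) = 0"
        using h y1 by (auto simp: lq less_Suc_eq)
      hence "\<phi> (y - \<psi> m y *\<^sub>R y1) = 0" using Suc.prems(3) by blast
      thus "\<phi>' y = 0" by (simp add: \<phi>'_def lp)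
    qed
    ultimately obtain c where c: "\<phi>' = (\<lambda>y. \<Sum>i<m. c i * \<psi> i y)"
      using Suc.IH[of \<phi>'] Suc.prems(2) by blast
    show ?thesis
    proof (intro exI[of _ "c(m := \<phi> y1)"] ext)
      fix y
      have "(\<Sum>i<m. (c(m := \<phi> y1)) i * \<psi> i y) = (\<Sum>i<m. c i * \<psi> i y)"
        by (intro sum.cong) auto
      also have "\<dots> = \<phi>' y" by (simp add: c)
      finally show "\<phi> y = (\<Sum>i<Suc m. (c(m := \<phi> y1)) i * \<psi> i y)"
        by (simp add: \<phi>'_def)
    qed
  next
    case False
    have "\<forall>y. (\<forall>i<m. \<psi> i y = 0) \<longrightarrow> \<phi> y = 0"
      using False Suc.prems(3) by (metis less_Suc_eq)
    then obtain c where c: "\<phi> = (\<lambda>y. \<Sum>i<m. c i * \<psi> i y)"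
      using Suc.IH[of \<phi>] Suc.prems(1,2) by blast
    show ?thesis
    proof (intro exI[of _ "c(m := 0)"] ext)
      fix y
      have "(\<Sum>i<m. (c(m := 0)) i * \<psi> i y) = (\<Sum>i<m. c i * \<psi> i y)"
        by (intro sum.cong) auto
      thus "\<phi> y = (\<Sum>i<Suc m. (c(m := 0)) i * \<psi> i y)" by (simp add: c)
    qed
  qed
qed



lemma Z_closed:
  fixes x :: "nat \<Rightarrow> 'a::real_normed_vector"
  assumes sm: "uniformly_smooth TYPE('a)"
    and G: "\<And>n. \<forall>i<m. sip (G n) (x i) = 0" and lim: "G \<longlonglongrightarrow> g"
  shows "\<forall>i<m. sip g (x i) = 0"
proof (intro allI impI)
  fix i assume i: "i < m"
  interpret bl: bounded_linear "\<lambda>y. sip y (x i)" by (rule sip_bounded_linear[OF sm])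
  have "(\<lambda>n. sip (G n) (x i)) \<longlonglongrightarrow> sip g (x i)" by (rule bl.tendsto[OF lim])
  moreover have "(\<lambda>n. sip (G n) (x i)) = (\<lambda>n. 0)" using G i by auto
  ultimately show "sip g (x i) = 0" by (metis LIMSEQ_unique tendsto_const)
qed

lemma Z_add:
  fixes x :: "nat \<Rightarrow> 'a::real_normed_vector"
  assumes sm: "uniformly_smooth TYPE('a)"
    and "\<forall>i<m. sip g (x i) = 0" "\<forall>i<m. sip h (x i) = 0"
  shows "\<forall>i<m. sip (a *\<^sub>R g + b *\<^sub>R h) (x i) = 0"
proof (intro allI impI)
  fix i assume i: "i < m"
  interpret bl: bounded_linear "\<lambda>y. sip y (x i)" by (rule sip_bounded_linear[OF sm])
  show "sip (a *\<^sub>R g + b *\<^sub>R h) (x i) = 0" using assms i by (simp add: bl.add bl.scaleR)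
qed

lemma minimizer:
  fixes x :: "nat \<Rightarrow> 'a::banach" and f0 :: 'a and m :: nat
  assumes sm: "uniformly_smooth TYPE('a)" and cv: "uniformly_convex TYPE('a)"
  defines "Z \<equiv> {g. \<forall>i<m. sip g (x i) = 0}"
  shows "\<exists>g\<in>Z. \<forall>g'\<in>Z. norm (f0 + g) \<le> norm (f0 + g')"
proof -
  have Zadd: "a *\<^sub>R g + b *\<^sub>R h \<in> Z" if "g \<in> Z" "h \<in> Z" for g h a b
    using Z_add[OF sm] that unfolding Z_def by blast
  have Z0: "0 \<in> Z" unfolding Z_def using linear_0[OF bounded_linear.linear[OF sip_bounded_linear[OF sm]]] by auto
  define S where "S = (\<lambda>g. norm (f0 + g)) ` Z"
  define d where "d = Inf S"
  have bdd: "bdd_below S" unfolding S_def by (rule bdd_belowI[of _ 0]) auto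
  have Sne: "S \<noteq> {}" using Z0 unfolding S_def by auto
  have dlow: "d \<le> norm (f0 + g')" if "g' \<in> Z" for g'
    unfolding d_def S_def using bdd that unfolding S_def by (auto intro: cInf_lower)
  have d0: "d \<ge> 0" unfolding d_def using Sne by (intro cInf_greatest) (auto simp: S_def)
  have ex: "\<exists>g\<in>Z. norm (f0 + g) < d + inverse (real (Suc n))" for n
  proof (rule ccontr)
    assume "\<not> ?thesis"
    hence "d + inverse (real (Suc n)) \<le> d" unfolding d_def using Sne
      by (intro cInf_greatest) (auto simp: S_def not_less d_def)
    thus False by (simp add: add_le_same_cancel1)
  qed
  then obtain G where G: "\<And>n. G n \<in> Z" "\<And>n. norm (f0 + G n) < d + inverse (real (Suc n))"
    by metis
  define u where "u n = f0 + G n" for n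
  have hconv: "\<exists>h. u \<longlonglongrightarrow> h"
  proof (cases "d = 0")
    case True
    have "u \<longlonglongrightarrow> 0"
    proof (rule Lim_null_comparison)
      show "\<forall>\<^sub>F n in sequentially. norm (u n) \<le> inverse (real (Suc n))"
        using G(2) True by (auto simp: u_def less_imp_le)
      show "(\<lambda>n. inverse (real (Suc n))) \<longlonglongrightarrow> 0" by (rule LIMSEQ_inverse_real_of_nat)
    qed
    thus ?thesis by blast
  next
    case False
    hence dpos: "d > 0" using d0 by simp
    have "Cauchy u"
    proof (unfold Cauchy_def, intro allI impI)
      fix e :: real assume e: "e > 0"
      have e': "e / (2 * d) > 0" using e dpos by simp
      from cv[unfolded uniformly_convex_def, rule_format, OF e']
      obtain \<delta> where \<delta>: "\<delta> > 0" and C: "\<forall>a b::'a. norm a \<le> 1 \<and> norm b \<le> 1 \<and> norm (a - b) \<ge> e / (2 * d)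
          \<longrightarrow> norm ((a + b) /\<^sub>R 2) \<le> 1 - \<delta>" by blast
      define \<eta> where "\<eta> = min 1 (\<delta> / 2)"
      have \<eta>: "\<eta> > 0" "\<eta> \<le> 1" "\<eta> \<le> \<delta> / 2" using \<delta> by (auto simp: \<eta>_def)
      obtain N where N: "inverse (real (Suc N)) < \<eta> * d"
        using reals_Archimedean[of "\<eta> * d"] \<eta> dpos by auto
      define R where "R = d + \<eta> * d"
      have ed: "0 < \<eta> * d" "\<eta> * d \<le> d" using \<eta> dpos by (simp_all add: mult_left_le_one_le)
      have R: "R > 0" "R \<le> 2 * d" using ed dpos by (auto simp: R_def)
      have un: "norm (u n) < R" if "n \<ge> N" for n
      proof -
        have "inverse (real (Suc n)) \<le> inverse (real (Suc N))"
          using that by (simp add: le_imp_inverse_le)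
        thus ?thesis using G(2)[of n] N unfolding u_def R_def by linarith
      qed
      have prod: "R * (1 - \<delta>) < d"
      proof -
        have "\<eta> * \<delta> * d > 0" using \<eta> \<delta> dpos by simp
        moreover have "R * (1 - \<delta>) = d + \<eta> * d - \<delta> * d - \<eta> * \<delta> * d" by (simp add: R_def algebra_simps)
        moreover have "\<eta> * d \<le> \<delta> / 2 * d" using \<eta> dpos by (simp add: mult_right_mono)
        moreover have "\<delta> * d > 0" using \<delta> dpos by simp
        ultimately show ?thesis by linarith
      qed
      show "\<exists>M. \<forall>m\<ge>M. \<forall>n\<ge>M. dist (u m) (u n) < e"
      proof (intro exI[of _ N] allI impI)
        fix m n assume mn: "m \<ge> N" "n \<ge> N"
        show "dist (u m) (u n) < e"
        proof (rule ccontr)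
          assume "\<not> ?thesis"
          hence big: "norm (u m - u n) \<ge> e" by (simp add: dist_norm)
          have nsc: "norm (w /\<^sub>R R) = norm w / R" for w :: 'a
            using R by (metis abs_of_pos divide_inverse_commute inverse_positive_iff_positive norm_scaleR)
          define a where "a = u m /\<^sub>R R"
          define b where "b = u n /\<^sub>R R"
          have na: "norm a \<le> 1" "norm b \<le> 1" using un[OF mn(1)] un[OF mn(2)] R
            by (auto simp: a_def b_def field_simps)
          have "a - b = (u m - u n) /\<^sub>R R" by (simp add: a_def b_def algebra_simps)
          hence "norm (a - b) = norm (u m - u n) / R" using R by (metis abs_of_pos divide_inverse_commute inverse_positive_iff_positive norm_scaleR)
          moreover have "e / (2 * d) \<le> e / R" using e R by (simp add: frac_le)
          moreover have "e / R \<le> norm (u m - u n) / R" using big R by (simp add: divide_right_mono)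
          ultimately have "norm (a - b) \<ge> e / (2 * d)" by linarith
          hence "norm ((a + b) /\<^sub>R 2) \<le> 1 - \<delta>" using C na by blast
          moreover have "(a + b) /\<^sub>R 2 = ((u m + u n) /\<^sub>R 2) /\<^sub>R R"
            by (simp add: a_def b_def algebra_simps)
          ultimately have "norm ((u m + u n) /\<^sub>R 2) / R \<le> 1 - \<delta>" by (simp only: nsc)
          hence le: "norm ((u m + u n) /\<^sub>R 2) \<le> R * (1 - \<delta>)" by (metis R(1) mult.commute pos_divide_le_eq)
          have "(u m + u n) /\<^sub>R 2 = f0 + ((1/2) *\<^sub>R G m + (1/2) *\<^sub>R G n)"
            apply (simp add: u_def algebra_simps)
            by (metis field_sum_of_halves scaleR_left_distrib scaleR_one)
          moreover have "(1/2) *\<^sub>R G m + (1/2) *\<^sub>R G n \<in> Z" using Zadd G(1) by blast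
          ultimately have "d \<le> norm ((u m + u n) /\<^sub>R 2)" using dlow by simp
          thus False using le prod by linarith
        qed
      qed
    qed
    thus ?thesis using Cauchy_convergent_iff convergent_def by blast
  qed
  then obtain h where h: "u \<longlonglongrightarrow> h" by blast
  have Glim: "G \<longlonglongrightarrow> h - f0"
  proof -
    have "(\<lambda>n. u n - f0) \<longlonglongrightarrow> h - f0" by (intro tendsto_diff h tendsto_const)
    thus ?thesis by (simp add: u_def)
  qed
  have gZ: "h - f0 \<in> Z"
    using Z_closed[OF sm _ Glim, of m x] G(1) unfolding Z_def by blast
  have "norm h \<le> d"
  proof (rule LIMSEQ_le)
    show "(\<lambda>n. norm (u n)) \<longlonglongrightarrow> norm h" by (rule tendsto_norm[OF h])
    show "(\<lambda>n. d + inverse (real (Suc n))) \<longlonglongrightarrow> d"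
      using tendsto_add[OF tendsto_const LIMSEQ_inverse_real_of_nat, of d] by simp
    show "\<exists>N. \<forall>n\<ge>N. norm (u n) \<le> d + inverse (real (Suc n))"
      using G(2) by (auto simp: u_def less_imp_le)
  qed
  hence "\<forall>g'\<in>Z. norm (f0 + (h - f0)) \<le> norm (f0 + g')" using dlow by force
  thus ?thesis using gZ by blast
qed



lemma dd_zero_at_min:
  fixes h z :: "'a::real_normed_vector"
  assumes sm: "uniformly_smooth TYPE('a)" and h: "h \<noteq> 0"
    and min: "\<And>t. norm h \<le> norm (h + t *\<^sub>R z)"
  shows "dd h z = 0"
proof -
  have L: "(qq h z \<longlongrightarrow> dd h z) (at 0)" by (rule dd_tendsto[OF sm h])
  have "0 \<le> dd h z"
  proof (rule tendsto_lowerbound[OF tendsto_within_subset[OF L]])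
    show "\<forall>\<^sub>F t in at_right 0. 0 \<le> qq h z t"
      using min by (auto simp: eventually_at_filter qq_def)
  qed auto
  moreover have "dd h z \<le> 0"
  proof (rule tendsto_upperbound[OF tendsto_within_subset[OF L]])
    show "\<forall>\<^sub>F t in at_left 0. qq h z t \<le> 0"
      using min by (auto simp: eventually_at_filter qq_def divide_nonneg_neg)
  qed auto
  ultimately show ?thesis by simp
qed

theorem mainTheorem10:
  fixes x :: "nat \<Rightarrow> 'a::banach" and m :: nat and f0 :: 'a
  assumes "uniform_banach TYPE('a)"
  shows "\<exists>g. (\<forall>i<m. sip g (x i) = 0)
            \<and> (\<exists>c::nat \<Rightarrow> real. dual_map (f0 + g) = (\<lambda>y. \<Sum>i<m. c i * dual_map (x i) y))
            \<and> norm (f0 + g) \<le> norm f0"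
proof -
  have sm: "uniformly_smooth TYPE('a)" and cv: "uniformly_convex TYPE('a)"
    using assms by (auto simp: uniform_banach_def)
  define Z where "Z = {g. \<forall>i<m. sip g (x i) = 0}"
  obtain g where gZ: "g \<in> Z" and gmin: "\<And>g'. g' \<in> Z \<Longrightarrow> norm (f0 + g) \<le> norm (f0 + g')"
    using minimizer[OF sm cv, of m x f0] unfolding Z_def by blast
  have Zadd: "a *\<^sub>R g1 + b *\<^sub>R g2 \<in> Z" if "g1 \<in> Z" "g2 \<in> Z" for g1 g2 a b
    using Z_add[OF sm] that unfolding Z_def by blast
  have Z0: "0 \<in> Z" unfolding Z_def
    using linear_0[OF bounded_linear.linear[OF sip_bounded_linear[OF sm]]] by auto
  define h where "h = f0 + g"
  have orth: "sip z h = 0" if z: "z \<in> Z" for z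
  proof (cases "h = 0")
    case True thus ?thesis by (simp add: sip_def)
  next
    case False
    have "norm h \<le> norm (h + t *\<^sub>R z)" for t
    proof -
      have "1 *\<^sub>R g + t *\<^sub>R z \<in> Z" using Zadd gZ z by blast
      from gmin[OF this] show ?thesis by (simp add: h_def add.assoc)
    qed
    hence "dd h z = 0" using dd_zero_at_min[OF sm False] by blast
    thus ?thesis using False by (simp add: sip_dd)
  qed
  have "\<exists>c. dual_map h = (\<lambda>y. \<Sum>i<m. c i * dual_map (x i) y)"
  proof (rule span_lemma)
    show "lin (dual_map h)" unfolding dual_map_def
      by (rule bounded_linear_lin[OF sip_bounded_linear[OF sm]])
    show "\<forall>i. lin (dual_map (x i))" unfolding dual_map_def
      using bounded_linear_lin[OF sip_bounded_linear[OF sm]] by blast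
    show "\<forall>y. (\<forall>i<m. dual_map (x i) y = 0) \<longrightarrow> dual_map h y = 0"
      using orth unfolding dual_map_def Z_def by blast
  qed
  moreover have "norm h \<le> norm f0" using gmin[OF Z0] by (simp add: h_def)
  ultimately show ?thesis using gZ unfolding Z_def h_def by blast
qed


end
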